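(* Let $M$ be an $n$-dimensional manifold with local coordinates $(u^1,\dots,u^m,v^{m+1},\dots,v^n)$, and let $L$ be an affinor on $M$ with zero Nijenhuis torsion which in these coordinates has the form $L=\begin{pmatrix}A(\mathbf u)&0\\0&B(\mathbf v)\end{pmatrix}$, where $A$ is $m\times m$ depending only on $\mathbf u=(u^1,\dots,u^m)$, $B$ depends only on $\mathbf v=(v^{m+1},\dots,v^n)$, and $\mathrm{Spec}(A)\cap\mathrm{Spec}(B)=\emptyset$. Let $g$ and $\tilde g$ be non-degenerate symmetric bivectors with $\tilde g^{ij}=L^j_kg^{ki}$, written in block form $g=\begin{pmatrix}\sigma&0\\0&\eta\end{pmatrix}$, $\tilde g=\begin{pmatrix}\tilde\sigma&0\\0&\tilde\eta\end{pmatrix}$. If the Killing condition $\nabla^i\tilde g^{kj}+\nabla^k\tilde g^{ij}+\nabla^j\tilde g^{ik}=0$ holds, then $\sigma,\tilde\sigma$ depend only on $\mathbf u$ and $\eta,\tilde\eta$ depend only on $\mathbf v$.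
   Context: $\nabla$ is the Levi-Civita connection of $g$ and $\nabla^i=g^{is}\nabla_s$. The Nijenhuis torsion of $L$ is $\mathcal N^k_{ij}=L^s_i\partial_sL^k_j-L^s_j\partial_sL^k_i+L^k_s\partial_jL^s_i-L^k_s\partial_iL^s_j$. *)

theory Defs
  imports "HOL-Analysis.Analysis"
begin

text \<open>Local coordinates: points of a coordinate domain are vectors x :: real^'n;
  the coordinate index set is the finite type 'n. A (1,1)-tensor field L is a
  matrix field with entry L x $ a $ b = L^a_b; a bivector field g has
  g x $ i $ j = g^{ij}.\<close>

definition partial :: "(real^'n \<Rightarrow> real) \<Rightarrow> 'n \<Rightarrow> real^'n \<Rightarrow> real" where
  "partial f s x = deriv (\<lambda>t. f (x + t *\<^sub>R axis s 1)) 0"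

fun Ck :: "nat \<Rightarrow> (real^'n) set \<Rightarrow> (real^'n \<Rightarrow> real) \<Rightarrow> bool" where
  "Ck 0 U f = continuous_on U f"
| "Ck (Suc k) U f = (f differentiable_on U \<and> (\<forall>s. Ck k U (partial f s)))"

definition smooth_fun :: "(real^'n) set \<Rightarrow> (real^'n \<Rightarrow> real) \<Rightarrow> bool" where
  "smooth_fun U f = (\<forall>k. Ck k U f)"

definition smooth_field :: "(real^'n) set \<Rightarrow> (real^'n \<Rightarrow> real^'n^'n) \<Rightarrow> bool" where
  "smooth_field U T = (\<forall>i j. smooth_fun U (\<lambda>x. T x $ i $ j))"

definition nijenhuis :: "(real^'n \<Rightarrow> real^'n^'n) \<Rightarrow> real^'n \<Rightarrow> 'n \<Rightarrow> 'n \<Rightarrow> 'n \<Rightarrow> real" where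
  "nijenhuis L x k i j = (\<Sum>s\<in>UNIV.
      L x $ s $ i * partial (\<lambda>y. L y $ k $ j) s x
    - L x $ s $ j * partial (\<lambda>y. L y $ k $ i) s x
    + L x $ k $ s * partial (\<lambda>y. L y $ s $ i) j x
    - L x $ k $ s * partial (\<lambda>y. L y $ s $ j) i x)"

definition lower :: "(real^'n \<Rightarrow> real^'n^'n) \<Rightarrow> real^'n \<Rightarrow> real^'n^'n" where
  "lower g x = matrix_inv (g x)"

definition christoffel :: "(real^'n \<Rightarrow> real^'n^'n) \<Rightarrow> 'n \<Rightarrow> 'n \<Rightarrow> 'n \<Rightarrow> real^'n \<Rightarrow> real" where
  "christoffel g k i j x = (1/2) * (\<Sum>l\<in>UNIV. g x $ k $ l *
      (partial (\<lambda>y. lower g y $ l $ j) i x + partial (\<lambda>y. lower g y $ l $ i) j x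
       - partial (\<lambda>y. lower g y $ i $ j) l x))"

definition covd :: "(real^'n \<Rightarrow> real^'n^'n) \<Rightarrow> (real^'n \<Rightarrow> real^'n^'n) \<Rightarrow> 'n \<Rightarrow> 'n \<Rightarrow> 'n \<Rightarrow> real^'n \<Rightarrow> real" where
  "covd g T s k j x = partial (\<lambda>y. T y $ k $ j) s x
     + (\<Sum>l\<in>UNIV. christoffel g k s l x * T x $ l $ j + christoffel g j s l x * T x $ k $ l)"

definition covd_up :: "(real^'n \<Rightarrow> real^'n^'n) \<Rightarrow> (real^'n \<Rightarrow> real^'n^'n) \<Rightarrow> 'n \<Rightarrow> 'n \<Rightarrow> 'n \<Rightarrow> real^'n \<Rightarrow> real" where
  "covd_up g T i k j x = (\<Sum>s\<in>UNIV. g x $ i $ s * covd g T s k j x)"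

definition block_eigenvalue :: "real^'n^'n \<Rightarrow> 'n set \<Rightarrow> complex \<Rightarrow> bool" where
  "block_eigenvalue M I c = (\<exists>w :: 'n \<Rightarrow> complex. (\<exists>i\<in>I. w i \<noteq> 0) \<and>
      (\<forall>i\<in>I. (\<Sum>j\<in>I. complex_of_real (M $ i $ j) * w j) = c * w i))"

end

theory Submission
  imports Defs "HOL-Complex_Analysis.Complex_Analysis"
begin

no_notation fps_nth (infixl \<open>$\<close> 75)
lemma inv_props:
  fixes A :: "'a::field^'n^'n"
  assumes "det A \<noteq> 0"
  shows "A ** matrix_inv A = mat 1" "matrix_inv A ** A = mat 1"
proof -
  have "invertible A" using invertible_det_nz assms by blast
  then have "\<exists>A'. A ** A' = mat 1 \<and> A' ** A = mat 1" unfolding invertible_def by blast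
  then have "A ** matrix_inv A = mat 1 \<and> matrix_inv A ** A = mat 1"
    unfolding matrix_inv_def by (rule someI_ex)
  then show "A ** matrix_inv A = mat 1" "matrix_inv A ** A = mat 1" by auto
qed

lemma det0_ex:
  fixes A :: "'a::field^'n^'n"
  assumes "det A = 0"
  shows "\<exists>v. v \<noteq> 0 \<and> A *v v = 0"
proof -
  have "\<not> inj ((*v) A)"
    using det_nz_iff_inj_gen[OF matrix_vector_mul_linear_gen[of A]] assms
    by (simp add: matrix_of_matrix_vector_mul)
  then obtain x y where "x \<noteq> y" "A *v x = A *v y" unfolding inj_def by blast
  then show ?thesis
    by (intro exI[of _ "x - y"]) (simp add: matrix_vector_mult_diff_distrib)
qed

lemma hol_det:
  fixes f :: "complex \<Rightarrow> complex^'n^'n"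
  assumes "\<And>i j. (\<lambda>z. f z $ i $ j) holomorphic_on S"
  shows "(\<lambda>z. det (f z)) holomorphic_on S"
  unfolding det_def by (intro holomorphic_on_sum holomorphic_on_mult holomorphic_on_const holomorphic_on_prod assms)

lemma inv_entry: "(matrix_inv A *v axis j 1) $ i = matrix_inv A $ i $ j"
  unfolding matrix_vector_mult_def axis_def by (simp add: if_distrib[of "(*) _"] cong: if_cong)

lemma hol_inv:
  fixes f :: "complex \<Rightarrow> complex^'n^'n"
  assumes "\<And>i j. (\<lambda>z. f z $ i $ j) holomorphic_on S" "\<And>z. z \<in> S \<Longrightarrow> det (f z) \<noteq> 0"
  shows "(\<lambda>z. matrix_inv (f z) $ i $ j) holomorphic_on S"
proof -
  have eq: "det (\<chi> a b. if b = i then axis j 1 $ a else f z $ a $ b) / det (f z) = matrix_inv (f z) $ i $ j"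
    if "z \<in> S" for z
  proof -
    have "f z *v (matrix_inv (f z) *v axis j 1) = axis j 1"
      using inv_props[OF assms(2)[OF that]] by (simp add: matrix_vector_mul_assoc)
    then have "matrix_inv (f z) *v axis j 1 = (\<chi> k. det(\<chi> a b. if b=k then axis j 1 $a else f z $a$b) / det (f z))"
      by (subst (asm) cramer[OF assms(2)[OF that]])
    then have "(matrix_inv (f z) *v axis j 1) $ i = det(\<chi> a b. if b=i then axis j 1 $a else f z $a$b) / det (f z)"
      by simp
    then show ?thesis using inv_entry[of "f z" j i] by simp
  qed
  have h: "\<And>a b. (\<lambda>z. (\<chi> a b. if b = i then axis j 1 $ a else f z $ a $ b) $ a $ b) holomorphic_on S"
  proof -
    fix a b show "(\<lambda>z. (\<chi> a b. if b = i then axis j 1 $ a else f z $ a $ b) $ a $ b) holomorphic_on S"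
      by (cases "b = i") (simp_all add: assms(1))
  qed
  have "(\<lambda>z. det (\<chi> a b. if b = i then axis j 1 $ a else f z $ a $ b) / det (f z)) holomorphic_on S"
    by (intro holomorphic_on_divide hol_det h assms(1) assms(2))
  then show ?thesis by (rule holomorphic_transform) (rule eq)
qed

definition Nm :: "'n set \<Rightarrow> real^'n^'n \<Rightarrow> complex \<Rightarrow> complex^'n^'n" where
  "Nm I M z = (\<chi> i j. if i \<in> I \<and> j \<in> I then (if i = j then z else 0) - complex_of_real (M$i$j)
                      else (if i = j then 1 else 0))"

definition Mc :: "real^'n^'n \<Rightarrow> complex^'n^'n" where
  "Mc M = (\<chi> i j. complex_of_real (M$i$j))"

definition Kb :: "real^'n^'n \<Rightarrow> real" where
  "Kb M = (\<Sum>i\<in>UNIV. \<Sum>j\<in>UNIV. \<bar>M$i$j\<bar>)"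

lemma sum_delta_mult: "(\<Sum>(j::'n::finite)\<in>UNIV. (if i = j then 1 else 0) * (f j::'a::semiring_1)) = f i"
proof -
  have "(\<Sum>j\<in>UNIV. (if i = j then 1 else 0) * f j) = (\<Sum>j\<in>UNIV. if i = j then f j else 0)"
    by (rule sum.cong) auto
  then show ?thesis by (simp add: sum.delta sum.delta')
qed

lemma Nm_mulv: "(Nm I M z *v v) $ i =
   (if i \<in> I then z * v$i - (\<Sum>j\<in>I. complex_of_real (M$i$j) * v$j) else v$i)"
proof (cases "i \<in> I")
  case True
  have "(Nm I M z *v v) $ i = (\<Sum>j\<in>UNIV. if j \<in> I then (if i = j then z * v$j else 0) - complex_of_real (M$i$j) * v$j else 0)"
    unfolding matrix_vector_mult_def Nm_def using True
    by (auto intro!: sum.cong simp: left_diff_distrib)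
  also have "\<dots> = (\<Sum>j\<in>I. (if i = j then z * v$j else 0) - complex_of_real (M$i$j) * v$j)"
    by (simp add: sum.If_cases)
  also have "\<dots> = z * v$i - (\<Sum>j\<in>I. complex_of_real (M$i$j) * v$j)"
    using True by (simp add: sum_subtractf)
  finally show ?thesis using True by simp
next
  case False
  have "(Nm I M z *v v) $ i = (\<Sum>j\<in>UNIV. (if i = j then 1 else 0) * v$j)"
    unfolding matrix_vector_mult_def Nm_def vec_lambda_beta using False
    by (intro sum.cong) auto
  then show ?thesis using False by (simp add: sum_delta_mult)
qed

lemma Nm_eig:
  assumes "det (Nm I M z) = 0"
  shows "block_eigenvalue M I z"
proof -
  obtain v where v: "v \<noteq> 0" "Nm I M z *v v = 0" using det0_ex[OF assms] by blast
  have out: "v$i = 0" if "i \<notin> I" for i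
    using arg_cong[OF v(2), of "\<lambda>w. w$i"] that by (simp add: Nm_mulv)
  obtain i where "v$i \<noteq> 0" using v(1) by (metis vec_eq_iff zero_index)
  then have ex: "\<exists>i\<in>I. v$i \<noteq> 0" using out by blast
  have "\<forall>i\<in>I. (\<Sum>j\<in>I. complex_of_real (M $ i $ j) * v$j) = z * v$i"
  proof
    fix i assume "i \<in> I"
    then show "(\<Sum>j\<in>I. complex_of_real (M $ i $ j) * v$j) = z * v$i"
      using arg_cong[OF v(2), of "\<lambda>w. w$i"] by (simp add: Nm_mulv)
  qed
  then show ?thesis unfolding block_eigenvalue_def using ex
    by (intro exI[of _ "\<lambda>i. v$i"]) auto
qed

lemma Kb_ge: "(\<Sum>j\<in>J. \<bar>M$i$j\<bar>) \<le> Kb M"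
proof -
  have "(\<Sum>j\<in>J. \<bar>M$i$j\<bar>) \<le> (\<Sum>j\<in>UNIV. \<bar>M$i$j\<bar>)"
    by (rule sum_mono2) auto
  also have "\<dots> \<le> Kb M" unfolding Kb_def
    by (rule member_le_sum) (auto intro: sum_nonneg)
  finally show ?thesis .
qed

lemma Kb_nonneg: "0 \<le> Kb M"
  unfolding Kb_def by (auto intro!: sum_nonneg)

lemma eig_bound:
  assumes "block_eigenvalue M I z"
  shows "cmod z \<le> Kb M"
proof -
  obtain w where w: "\<exists>i\<in>I. w i \<noteq> 0" "\<forall>i\<in>I. (\<Sum>j\<in>I. complex_of_real (M $ i $ j) * w j) = z * w i"
    using assms unfolding block_eigenvalue_def by blast
  have fI: "finite I" by simp
  have ne: "I \<noteq> {}" using w(1) by blast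
  define m where "m = Max ((\<lambda>i. cmod (w i)) ` I)"
  have "m \<in> (\<lambda>i. cmod (w i)) ` I" unfolding m_def using ne by (intro Max_in) auto
  then obtain i0 where i0: "i0 \<in> I" "cmod (w i0) = m" by (metis imageE)
  have le: "cmod (w j) \<le> m" if "j \<in> I" for j
    unfolding m_def using that fI by (intro Max_ge) auto
  have mpos: "m > 0"
  proof -
    obtain i where "i \<in> I" "w i \<noteq> 0" using w(1) by blast
    then show ?thesis using le[of i] by (metis norm_le_zero_iff not_less order_trans)
  qed
  have "cmod z * m = cmod (\<Sum>j\<in>I. complex_of_real (M $ i0 $ j) * w j)"
    using w(2) i0 by (simp add: norm_mult)
  also have "\<dots> \<le> (\<Sum>j\<in>I. \<bar>M $ i0 $ j\<bar> * m)"
    by (rule order_trans[OF norm_sum]) (auto intro!: sum_mono mult_left_mono le simp: norm_mult)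
  also have "\<dots> = (\<Sum>j\<in>I. \<bar>M $ i0 $ j\<bar>) * m" by (simp add: sum_distrib_right)
  also have "\<dots> \<le> Kb M * m" using mpos Kb_ge by (intro mult_right_mono) auto
  finally show ?thesis using mpos by simp
qed

lemma decay:
  assumes z: "cmod z > Kb M" and x: "Nm I M z *v x = y" and y: "\<forall>i. i \<notin> I \<longrightarrow> y$i = 0"
  shows "cmod (x$b) * (cmod z - Kb M) \<le> (\<Sum>i\<in>UNIV. cmod (y$i))"
proof -
  have comp: "y$i = (if i \<in> I then z * x$i - (\<Sum>j\<in>I. complex_of_real (M$i$j) * x$j) else x$i)" for i
    using arg_cong[OF x, of "\<lambda>w. w$i"] by (simp add: Nm_mulv)
  define m where "m = Max ((\<lambda>i. cmod (x$i)) ` UNIV)"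
  have "m \<in> (\<lambda>i. cmod (x$i)) ` UNIV" unfolding m_def by (intro Max_in) auto
  then obtain i0 where i0: "cmod (x$i0) = m" by (metis imageE)
  have le: "cmod (x$j) \<le> m" for j
    unfolding m_def by (intro Max_ge) auto
  have Ysum: "cmod (y$i) \<le> (\<Sum>i\<in>UNIV. cmod (y$i))" for i
    by (rule member_le_sum) auto
  have Ynn: "0 \<le> (\<Sum>i\<in>UNIV. cmod (y$i))" by (auto intro: sum_nonneg)
  have "m * (cmod z - Kb M) \<le> (\<Sum>i\<in>UNIV. cmod (y$i))"
  proof (cases "i0 \<in> I")
    case False
    then have "m = 0" using comp[of i0] y i0 by auto
    then show ?thesis using Ynn by simp
  next
    case True
    then have "z * x$i0 = y$i0 + (\<Sum>j\<in>I. complex_of_real (M$i0$j) * x$j)"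
      using comp[of i0] by simp
    then have "cmod z * m \<le> cmod (y$i0) + cmod (\<Sum>j\<in>I. complex_of_real (M$i0$j) * x$j)"
      using i0 by (metis norm_mult norm_triangle_ineq)
    also have "cmod (\<Sum>j\<in>I. complex_of_real (M$i0$j) * x$j) \<le> (\<Sum>j\<in>I. \<bar>M $ i0 $ j\<bar> * m)"
      by (rule order_trans[OF norm_sum]) (auto intro!: sum_mono mult_left_mono le simp: norm_mult)
    also have "(\<Sum>j\<in>I. \<bar>M $ i0 $ j\<bar> * m) = (\<Sum>j\<in>I. \<bar>M $ i0 $ j\<bar>) * m" by (simp add: sum_distrib_right)
    also have "\<dots> \<le> Kb M * m" using Kb_ge by (intro mult_right_mono) (auto simp: i0[symmetric])
    finally have "cmod z * m \<le> cmod (y$i0) + Kb M * m" by simp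
    then show ?thesis using Ysum[of i0] by (simp add: algebra_simps)
  qed
  moreover have "cmod (x$b) * (cmod z - Kb M) \<le> m * (cmod z - Kb M)"
    using z le by (intro mult_right_mono) auto
  ultimately show ?thesis by linarith
qed

lemma mat_eqI: "(\<And>i j. A$i$j = B$i$j) \<Longrightarrow> A = B"
  by (simp add: vec_eq_iff)

lemma Nm_hol: "(\<lambda>z. Nm I M z $ i $ j) holomorphic_on S"
  unfolding Nm_def by (cases "i \<in> I \<and> j \<in> I"; cases "i = j") (auto intro!: holomorphic_intros)

lemma NmZ:
  fixes Z :: "complex^'n^'n"
  assumes block: "\<forall>i j. (i\<in>I \<longleftrightarrow> j\<notin>I) \<longrightarrow> M$i$j = 0"
    and supp: "\<forall>i j. \<not>(i\<in>I \<and> j\<notin>I) \<longrightarrow> Z$i$j = 0"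
  shows "Nm I M z ** Z = (\<chi> i j. z * Z$i$j) - Mc M ** Z" "Z ** Nm (-I) M z = (\<chi> i j. z * Z$i$j) - Z ** Mc M"
proof -
  show "Nm I M z ** Z = (\<chi> i j. z * Z$i$j) - Mc M ** Z"
  proof (rule mat_eqI)
    fix i j
    have "(Nm I M z ** Z) $ i $ j = (\<Sum>k\<in>UNIV. (if i = k then 1 else 0) * (z * Z$k$j) - Mc M $ i $ k * Z $ k $ j)"
      unfolding matrix_matrix_mult_def Nm_def Mc_def vec_lambda_beta
      by (intro sum.cong refl) (use block supp in \<open>auto simp: algebra_simps\<close>)
    also have "\<dots> = z * Z$i$j - (Mc M ** Z) $ i $ j"
      by (simp add: sum_subtractf sum_delta_mult matrix_matrix_mult_def)
    finally show "(Nm I M z ** Z) $ i $ j = ((\<chi> i j. z * Z$i$j) - Mc M ** Z) $ i $ j" by simp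
  qed
  show "Z ** Nm (-I) M z = (\<chi> i j. z * Z$i$j) - Z ** Mc M"
  proof (rule mat_eqI)
    fix i j
    have "(Z ** Nm (-I) M z) $ i $ j = (\<Sum>k\<in>UNIV. (if j = k then 1 else 0) * (z * Z$i$k) - Z $ i $ k * Mc M $ k $ j)"
      unfolding matrix_matrix_mult_def Nm_def Mc_def vec_lambda_beta
      by (intro sum.cong refl) (use block supp in \<open>auto simp: algebra_simps\<close>)
    also have "\<dots> = z * Z$i$j - (Z ** Mc M) $ i $ j"
      by (simp add: sum_subtractf sum_delta_mult matrix_matrix_mult_def)
    finally show "(Z ** Nm (-I) M z) $ i $ j = ((\<chi> i j. z * Z$i$j) - Z ** Mc M) $ i $ j" by simp
  qed
qed

lemma sylvester:
  fixes M :: "real^'n^'n" and Z :: "complex^'n^'n"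
  assumes block: "\<forall>i j. (i\<in>I \<longleftrightarrow> j\<notin>I) \<longrightarrow> M$i$j = 0"
    and spec: "\<forall>c. \<not> (block_eigenvalue M I c \<and> block_eigenvalue M (-I) c)"
    and supp: "\<forall>i j. \<not>(i\<in>I \<and> j\<notin>I) \<longrightarrow> Z$i$j = 0"
    and comm: "Mc M ** Z = Z ** Mc M"
  shows "Z = 0"
proof -
  have block': "\<forall>i j. (i\<in>-I \<longleftrightarrow> j\<notin>-I) \<longrightarrow> M$i$j = 0" using block by auto
  have NZ: "Nm I M z ** Z = Z ** Nm (-I) M z" for z
    using NmZ[OF block supp, of z] comm by simp
  define SA where "SA = {z. det (Nm I M z) \<noteq> 0}"
  define SB where "SB = {z. det (Nm (-I) M z) \<noteq> 0}"
  have holA: "(\<lambda>z. det (Nm I M z)) holomorphic_on UNIV" by (intro hol_det Nm_hol)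
  have holB: "(\<lambda>z. det (Nm (-I) M z)) holomorphic_on UNIV" by (intro hol_det Nm_hol)
  have oSA: "open SA" unfolding SA_def
    by (rule open_Collect_neq) (auto intro: holomorphic_on_imp_continuous_on holA)
  have oSB: "open SB" unfolding SB_def
    by (rule open_Collect_neq) (auto intro: holomorphic_on_imp_continuous_on holB)
  have cover: "SA \<union> SB = UNIV"
    using spec Nm_eig unfolding SA_def SB_def by blast
  define FA where "FA z = matrix_inv (Nm I M z) ** Z" for z
  define FB where "FB z = Z ** matrix_inv (Nm (-I) M z)" for z
  have FAB: "FA z = FB z" if "z \<in> SA" "z \<in> SB" for z
  proof -
    note a = inv_props[of "Nm I M z"] and b = inv_props[of "Nm (-I) M z"]
    have "FA z = matrix_inv (Nm I M z) ** Z ** (Nm (-I) M z ** matrix_inv (Nm (-I) M z))"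
      unfolding FA_def using b that SB_def by simp
    also have "\<dots> = matrix_inv (Nm I M z) ** (Nm I M z ** Z) ** matrix_inv (Nm (-I) M z)"
      by (simp add: matrix_mul_assoc NZ)
    also have "\<dots> = (matrix_inv (Nm I M z) ** Nm I M z) ** Z ** matrix_inv (Nm (-I) M z)"
      by (simp add: matrix_mul_assoc)
    also have "\<dots> = FB z"
      unfolding FB_def using a that SA_def by (simp add: matrix_mul_lid)
    finally show ?thesis .
  qed
  have Zent0: "FA z $ b $ s = 0" if "z \<in> SA" for z b s
  proof -
    have hFA: "(\<lambda>z. FA z $ b $ s) holomorphic_on SA"
      unfolding FA_def matrix_matrix_mult_def vec_lambda_beta
      by (intro holomorphic_intros hol_inv Nm_hol) (auto simp: SA_def)
    have hFB: "(\<lambda>z. FB z $ b $ s) holomorphic_on SB"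
      unfolding FB_def matrix_matrix_mult_def vec_lambda_beta
      by (intro holomorphic_intros hol_inv Nm_hol) (auto simp: SB_def)
    define F where "F z = (if z \<in> SA then FA z $ b $ s else FB z $ b $ s)" for z
    have "F holomorphic_on SA" using hFA by (rule holomorphic_transform) (simp add: F_def)
    moreover have "F holomorphic_on SB" using hFB by (rule holomorphic_transform) (simp add: F_def FAB)
    ultimately have hF: "F holomorphic_on UNIV"
      using holomorphic_on_Un[OF _ _ oSA oSB] cover by metis
    define Y where "Y = (\<Sum>i\<in>UNIV. cmod (Z$i$s))"
    have Ynn: "0 \<le> Y" unfolding Y_def by (auto intro: sum_nonneg)
    have bound: "cmod (F z) * (cmod z - Kb M) \<le> Y" if "cmod z > Kb M" for z
    proof -
      have zA: "z \<in> SA" using that eig_bound Nm_eig unfolding SA_def by fastforce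
      define x where "x = matrix_inv (Nm I M z) *v column s Z"
      have "Nm I M z *v x = column s Z"
        unfolding x_def using inv_props[of "Nm I M z"] zA
        by (simp add: SA_def matrix_vector_mul_assoc)
      moreover have "\<forall>i. i \<notin> I \<longrightarrow> column s Z $ i = 0" using supp by (simp add: column_def)
      ultimately have "cmod (x$b) * (cmod z - Kb M) \<le> (\<Sum>i\<in>UNIV. cmod (column s Z $ i))"
        using decay[OF that] by blast
      moreover have "F z = x$b"
        using zA unfolding F_def FA_def x_def
        by (simp add: matrix_matrix_mult_def matrix_vector_mult_def column_def)
      ultimately show ?thesis unfolding Y_def by (simp add: column_def)
    qed
    have lim: "(F \<longlongrightarrow> 0) at_infinity"
      unfolding Lim_at_infinity
    proof (intro allI impI)
      fix e :: real assume e: "e > 0"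
      show "\<exists>r. \<forall>z. r \<le> norm z \<longrightarrow> dist (F z) 0 < e"
      proof (intro exI allI impI)
        fix z :: complex assume z: "Kb M + 1 + Y / e \<le> norm z"
        have pos: "cmod z - Kb M > 0" using z Ynn e by (smt (verit) divide_nonneg_pos)
        have "cmod (F z) * (cmod z - Kb M) \<le> Y" using bound pos by simp
        moreover have "Y < e * (cmod z - Kb M)"
        proof -
          have "Y / e < cmod z - Kb M" using z by simp
          then show ?thesis using e by (simp add: divide_less_eq mult.commute)
        qed
        ultimately have "cmod (F z) * (cmod z - Kb M) < e * (cmod z - Kb M)" by linarith
        then show "dist (F z) 0 < e" using pos by simp
      qed
    qed
    have "F z = 0" by (rule Liouville_weak_0[OF hF lim])
    then show ?thesis using that by (simp add: F_def)
  qed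
  define z0 where "z0 = complex_of_real (Kb M + 1)"
  have z0A: "z0 \<in> SA"
  proof -
    have "cmod z0 > Kb M" unfolding z0_def using Kb_nonneg[of M] by simp
    then show ?thesis using eig_bound Nm_eig unfolding SA_def by fastforce
  qed
  have "FA z0 = 0" using Zent0[OF z0A] by (simp add: vec_eq_iff)
  then have "Nm I M z0 ** FA z0 = 0" by simp
  moreover have "Nm I M z0 ** FA z0 = Z"
    unfolding FA_def using inv_props[of "Nm I M z0"] z0A
    by (simp add: SA_def matrix_mul_assoc)
  ultimately show ?thesis by simp
qed


lemma compat_alg:
  fixes g G :: "'n::finite \<Rightarrow> 'n \<Rightarrow> real" and dg dG :: "'n \<Rightarrow> 'n \<Rightarrow> 'n \<Rightarrow> real"
  assumes gsym: "\<And>i j. g i j = g j i"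
    and dGsym: "\<And>l i j. dG l i j = dG l j i"
    and Gg: "\<And>m i. (\<Sum>s\<in>UNIV. G m s * g s i) = (if m = i then 1 else 0)"
    and H: "\<And>l k s. (\<Sum>m\<in>UNIV. g k m * dG l m s) = - (\<Sum>m\<in>UNIV. dg l k m * G m s)"
  defines "\<Gamma> \<equiv> \<lambda>k i j. 1/2 * (\<Sum>l\<in>UNIV. g k l * (dG i l j + dG j l i - dG l i j))"
  shows "(\<Sum>s\<in>UNIV. g i s * \<Gamma> k s l) + (\<Sum>s\<in>UNIV. g k s * \<Gamma> i s l) = - dg l k i"
proof -
  have 1: "(\<Sum>s\<in>UNIV. g i s * \<Gamma> k s l) = (\<Sum>s\<in>UNIV. \<Sum>m\<in>UNIV. 1/2 * (g i s * g k m * (dG s m l + dG l m s - dG m s l)))"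
    unfolding \<Gamma>_def by (simp add: sum_distrib_left mult.assoc mult.left_commute)
  have 2: "(\<Sum>s\<in>UNIV. g k s * \<Gamma> i s l) = (\<Sum>s\<in>UNIV. \<Sum>m\<in>UNIV. 1/2 * (g k m * g i s * (dG m s l + dG l s m - dG s m l)))"
  proof -
    have "(\<Sum>s\<in>UNIV. g k s * \<Gamma> i s l) = (\<Sum>m\<in>UNIV. \<Sum>s\<in>UNIV. 1/2 * (g k m * g i s * (dG m s l + dG l s m - dG s m l)))"
      unfolding \<Gamma>_def by (simp add: sum_distrib_left mult.assoc mult.left_commute)
    also have "\<dots> = (\<Sum>s\<in>UNIV. \<Sum>m\<in>UNIV. 1/2 * (g k m * g i s * (dG m s l + dG l s m - dG s m l)))"
      by (rule sum.swap)
    finally show ?thesis .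
  qed
  have "(\<Sum>s\<in>UNIV. g i s * \<Gamma> k s l) + (\<Sum>s\<in>UNIV. g k s * \<Gamma> i s l)
      = (\<Sum>s\<in>UNIV. \<Sum>m\<in>UNIV. g i s * (g k m * dG l m s))"
    unfolding 1 2 sum.distrib[symmetric]
    by (intro sum.cong refl) (simp add: dGsym[of l] algebra_simps)
  also have "\<dots> = (\<Sum>s\<in>UNIV. g i s * (- (\<Sum>m\<in>UNIV. dg l k m * G m s)))"
    by (simp add: sum_distrib_left[symmetric] H)
  also have "\<dots> = - (\<Sum>s\<in>UNIV. \<Sum>m\<in>UNIV. dg l k m * (G m s * g s i))"
    by (simp add: sum_distrib_left sum_negf gsym[of i] mult.commute mult.left_commute)
  also have "\<dots> = - (\<Sum>m\<in>UNIV. \<Sum>s\<in>UNIV. dg l k m * (G m s * g s i))"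
    by (subst sum.swap) (rule refl)
  also have "\<dots> = - (\<Sum>m\<in>UNIV. dg l k m * (\<Sum>s\<in>UNIV. G m s * g s i))"
    by (simp add: sum_distrib_left)
  also have "\<dots> = - dg l k i"
    by (simp add: Gg if_distrib[of "(*) _"] cong: if_cong)
  finally show ?thesis .
qed


lemma killing_alg:
  fixes g G T :: "'n::finite \<Rightarrow> 'n \<Rightarrow> real" and dg dG dT :: "'n \<Rightarrow> 'n \<Rightarrow> 'n \<Rightarrow> real"
  assumes gsym: "\<And>i j. g i j = g j i"
    and Tsym: "\<And>i j. T i j = T j i"
    and dGsym: "\<And>l i j. dG l i j = dG l j i"
    and Gg: "\<And>m i. (\<Sum>s\<in>UNIV. G m s * g s i) = (if m = i then 1 else 0)"
    and H: "\<And>l k s. (\<Sum>m\<in>UNIV. g k m * dG l m s) = - (\<Sum>m\<in>UNIV. dg l k m * G m s)"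
  defines "\<Gamma> \<equiv> \<lambda>k i j. 1/2 * (\<Sum>l\<in>UNIV. g k l * (dG i l j + dG j l i - dG l i j))"
  defines "cov \<equiv> \<lambda>s k j. dT s k j + (\<Sum>l\<in>UNIV. \<Gamma> k s l * T l j + \<Gamma> j s l * T k l)"
  defines "cu \<equiv> \<lambda>i k j. \<Sum>s\<in>UNIV. g i s * cov s k j"
  shows "cu i k j + cu k i j + cu j i k =
     (\<Sum>s\<in>UNIV. g i s * dT s k j + g k s * dT s i j + g j s * dT s i k)
   - (\<Sum>l\<in>UNIV. T l j * dg l k i + T l k * dg l j i + T i l * dg l j k)"
proof -
  define A where "A = (\<lambda>i k l. \<Sum>s\<in>UNIV. g i s * \<Gamma> k s l)"
  have C: "A k i l = - dg l k i - A i k l" for i k l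
    using compat_alg[where g=g and G=G and dg=dg and dG=dG and i=i and k=k and l=l, OF gsym dGsym Gg H] unfolding A_def \<Gamma>_def by simp
  have cu_eq: "cu i k j = (\<Sum>s\<in>UNIV. g i s * dT s k j) + (\<Sum>l\<in>UNIV. T l j * A i k l + T k l * A i j l)" for i k j
  proof -
    have "cu i k j = (\<Sum>s\<in>UNIV. g i s * dT s k j) + (\<Sum>s\<in>UNIV. \<Sum>l\<in>UNIV. g i s * \<Gamma> k s l * T l j + g i s * \<Gamma> j s l * T k l)"
      unfolding cu_def cov_def by (simp add: distrib_left sum.distrib sum_distrib_left mult.assoc)
    also have "(\<Sum>s\<in>UNIV. \<Sum>l\<in>UNIV. g i s * \<Gamma> k s l * T l j + g i s * \<Gamma> j s l * T k l)
        = (\<Sum>l\<in>UNIV. \<Sum>s\<in>UNIV. g i s * \<Gamma> k s l * T l j + g i s * \<Gamma> j s l * T k l)"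
      by (rule sum.swap)
    also have "\<dots> = (\<Sum>l\<in>UNIV. T l j * A i k l + T k l * A i j l)"
      unfolding A_def by (simp add: sum.distrib sum_distrib_left mult_ac)
    finally show ?thesis .
  qed
  have "cu i k j + cu k i j + cu j i k =
     (\<Sum>s\<in>UNIV. g i s * dT s k j + g k s * dT s i j + g j s * dT s i k)
   + (\<Sum>l\<in>UNIV. (T l j * A i k l + T k l * A i j l) + (T l j * A k i l + T i l * A k j l) + (T l k * A j i l + T i l * A j k l))"
    unfolding cu_eq sum.distrib by (simp add: add_ac)
  also have "(\<Sum>l\<in>UNIV. (T l j * A i k l + T k l * A i j l) + (T l j * A k i l + T i l * A k j l) + (T l k * A j i l + T i l * A j k l))
     = (\<Sum>l\<in>UNIV. - (T l j * dg l k i + T l k * dg l j i + T i l * dg l j k))"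
  proof (rule sum.cong[OF refl])
    fix l
    show "(T l j * A i k l + T k l * A i j l) + (T l j * A k i l + T i l * A k j l) + (T l k * A j i l + T i l * A j k l)
       = - (T l j * dg l k i + T l k * dg l j i + T i l * dg l j k)"
      unfolding C[of k i l] C[of j i l] C[of j k l] Tsym[of k l] by (simp add: algebra_simps)
  qed
  also have "(\<Sum>l\<in>UNIV. - (T l j * dg l k i + T l k * dg l j i + T i l * dg l j k))
     = - (\<Sum>l\<in>UNIV. T l j * dg l k i + T l k * dg l j i + T i l * dg l j k)"
    by (rule sum_negf)
  finally show ?thesis by simp
qed


definition HD :: "(real^'n \<Rightarrow> real) \<Rightarrow> 'n \<Rightarrow> real^'n \<Rightarrow> real \<Rightarrow> bool" where
  "HD f s x d \<longleftrightarrow> ((\<lambda>t. f (x + t *\<^sub>R axis s 1)) has_real_derivative d) (at 0)"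

definition LD :: "(real^'n \<Rightarrow> real) \<Rightarrow> 'n \<Rightarrow> real^'n \<Rightarrow> bool" where
  "LD f s x \<longleftrightarrow> (\<lambda>t. f (x + t *\<^sub>R axis s 1)) differentiable (at 0)"

lemma HD_partial: "HD f s x d \<Longrightarrow> partial f s x = d"
  unfolding HD_def partial_def by (rule DERIV_imp_deriv)

lemma HD_unique: "HD f s x d1 \<Longrightarrow> HD f s x d2 \<Longrightarrow> d1 = d2"
  unfolding HD_def by (rule DERIV_unique)

lemma LD_HD: "LD f s x \<Longrightarrow> HD f s x (partial f s x)"
  unfolding LD_def HD_def partial_def by (simp add: DERIV_deriv_iff_real_differentiable)

lemma HD_LD: "HD f s x d \<Longrightarrow> LD f s x"
  unfolding LD_def HD_def using real_differentiable_def by blast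

lemma line_open:
  fixes x :: "real^'n"
  assumes "open U" shows "open {t::real. x + t *\<^sub>R axis s 1 \<in> U}"
proof -
  have "open ((\<lambda>t::real. x + t *\<^sub>R axis s 1) -` U)"
  proof (rule continuous_open_vimage[OF assms])
    fix a :: real
    have "((\<lambda>t::real. x + t *\<^sub>R axis s 1) has_derivative (\<lambda>t. t *\<^sub>R axis s 1)) (at a)"
      by (intro derivative_eq_intros) auto
    then show "isCont (\<lambda>t::real. x + t *\<^sub>R axis s 1) a" by (rule has_derivative_continuous)
  qed
  then show ?thesis by (simp add: vimage_def)
qed

lemma HD_local:
  assumes "open U" "x \<in> U" "\<And>y. y \<in> U \<Longrightarrow> f y = h y" "HD f s x d"
  shows "HD h s x d"
  using assms(4) unfolding HD_def
  by (rule has_field_derivative_transform_within_open[OF _ line_open[OF assms(1)]]) (use assms in auto)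

lemma partial_local:
  assumes "open U" "x \<in> U" "\<And>y. y \<in> U \<Longrightarrow> f y = h y"
  shows "partial f s x = partial h s x"
proof -
  have "HD f s x D \<longleftrightarrow> HD h s x D" for D
    using HD_local[OF assms(1,2)] assms(3) by metis
  then show ?thesis unfolding partial_def deriv_def HD_def by simp
qed

lemma partial_const: "partial (\<lambda>y. c) s x = 0"
  using HD_partial[of "\<lambda>y. c" s x 0] unfolding HD_def by simp

lemma partial_zero_local:
  assumes "open U" "x \<in> U" "\<And>y. y \<in> U \<Longrightarrow> f y = 0"
  shows "partial f s x = 0"
  using partial_local[OF assms(1,2), of f "\<lambda>y. 0"] assms(3) partial_const by simp

lemma C1_LD:
  assumes "open U" "x \<in> U" "f differentiable_on U"
  shows "LD f s x"
proof -
  have f: "f differentiable (at x)" using assms differentiable_on_eq_differentiable_at by blast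
  have "((\<lambda>t::real. x + t *\<^sub>R axis s 1) has_derivative (\<lambda>t. t *\<^sub>R axis s 1)) (at 0)"
    by (intro derivative_eq_intros) auto
  then have l: "(\<lambda>t::real. x + t *\<^sub>R axis s 1) differentiable (at 0)"
    by (rule differentiableI)
  have "(f \<circ> (\<lambda>t::real. x + t *\<^sub>R axis s 1)) differentiable (at 0)"
    by (rule differentiable_chain_at[OF l]) (simp add: f)
  then show ?thesis unfolding LD_def o_def .
qed

lemma smooth_LD:
  assumes "open U" "x \<in> U" "smooth_fun U f"
  shows "LD f s x"
proof -
  have "Ck (Suc 0) U f" using assms(3) unfolding smooth_fun_def by blast
  then show ?thesis using C1_LD[OF assms(1,2)] by simp
qed

lemma LD_local:
  assumes "open U" "x \<in> U" "\<And>y. y \<in> U \<Longrightarrow> f y = h y" "LD f s x"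
  shows "LD h s x"
proof -
  have "HD h s x (partial f s x)"
    using HD_local[of U x f h, OF assms(1,2)] assms(3) LD_HD[OF assms(4)] by blast
  then show ?thesis by (rule HD_LD)
qed

lemma LD_const: "LD (\<lambda>y. c) s x" unfolding LD_def by simp

lemma LD_add: "LD f s x \<Longrightarrow> LD h s x \<Longrightarrow> LD (\<lambda>y. f y + h y) s x"
  unfolding LD_def by (rule differentiable_add)

lemma LD_diff: "LD f s x \<Longrightarrow> LD h s x \<Longrightarrow> LD (\<lambda>y. f y - h y) s x"
  unfolding LD_def by (rule differentiable_diff)

lemma LD_mult: "LD f s x \<Longrightarrow> LD h s x \<Longrightarrow> LD (\<lambda>y. f y * h y) s x"
  unfolding LD_def by (rule differentiable_mult)

lemma LD_divide: "LD f s x \<Longrightarrow> LD h s x \<Longrightarrow> h x \<noteq> 0 \<Longrightarrow> LD (\<lambda>y. f y / h y) s x"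
  unfolding LD_def by (rule differentiable_divide) auto

lemma LD_sum: "finite A \<Longrightarrow> (\<And>a. a \<in> A \<Longrightarrow> LD (f a) s x) \<Longrightarrow> LD (\<lambda>y. \<Sum>a\<in>A. f a y) s x"
  by (induction A rule: finite_induct) (auto intro: LD_add LD_const)

lemma LD_prod: "finite A \<Longrightarrow> (\<And>a. a \<in> A \<Longrightarrow> LD (f a) s x) \<Longrightarrow> LD (\<lambda>y. \<Prod>a\<in>A. f a y) s x"
  by (induction A rule: finite_induct) (auto intro: LD_mult LD_const)

lemma LD_det:
  fixes F :: "real^'n \<Rightarrow> real^'n^'n"
  assumes "\<And>a b. LD (\<lambda>y. F y $ a $ b) s x"
  shows "LD (\<lambda>y. det (F y)) s x"
  unfolding det_def
  by (intro LD_sum LD_mult LD_const LD_prod assms) auto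

lemma HD_sum_prod:
  assumes "\<And>k. HD (f k) s x (df k)" "\<And>k. HD (h k) s x (dh k)"
  shows "HD (\<lambda>y. \<Sum>k\<in>(UNIV::'m::finite set). f k y * h k y) s x (\<Sum>k\<in>UNIV. df k * h k x + f k x * dh k)"
proof -
  have "((\<lambda>t. f k (x + t *\<^sub>R axis s 1) * h k (x + t *\<^sub>R axis s 1)) has_real_derivative df k * h k x + f k x * dh k) (at 0)" for k
    using DERIV_mult[OF assms(1)[unfolded HD_def] assms(2)[unfolded HD_def], of k k] by (simp add: mult.commute)
  then show ?thesis unfolding HD_def by (auto intro: DERIV_sum)
qed



lemma inv_cramer:
  fixes A :: "'a::field^'n^'n"
  assumes "det A \<noteq> 0"
  shows "matrix_inv A $ a $ b = det (\<chi> p q. if q = a then axis b 1 $ p else A $ p $ q) / det A"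
proof -
  have "A *v (matrix_inv A *v axis b 1) = axis b 1"
    using inv_props[OF assms] by (simp add: matrix_vector_mul_assoc)
  then have "matrix_inv A *v axis b 1 = (\<chi> k. det(\<chi> p q. if q=k then axis b 1 $p else A $p$q) / det A)"
    by (subst (asm) cramer[OF assms])
  then have "(matrix_inv A *v axis b 1) $ a = det(\<chi> p q. if q=a then axis b 1 $p else A $p$q) / det A"
    by simp
  then show ?thesis using inv_entry[of A b a] by simp
qed

lemma inv_sym:
  fixes A :: "real^'n^'n"
  assumes "transpose A = A" "det A \<noteq> 0"
  shows "transpose (matrix_inv A) = matrix_inv A"
proof -
  define B where "B = matrix_inv A"
  have AB: "A ** B = mat 1" "B ** A = mat 1" using inv_props[OF assms(2)] by (auto simp: B_def)
  have "transpose B ** A = mat 1"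
    using matrix_transpose_mul[of A B] AB(1) assms(1) by simp
  then have "transpose B = transpose B ** (A ** B)" using AB by simp
  also have "\<dots> = B" by (simp add: matrix_mul_assoc \<open>transpose B ** A = mat 1\<close>)
  finally show ?thesis unfolding B_def .
qed

lemma one_side:
  fixes U :: "(real^'n) set" and Iu :: "'n set"
    and L g gt :: "real^'n \<Rightarrow> real^'n^'n"
  assumes U_open: "open U"
    and L_smooth: "smooth_field U L" and g_smooth: "smooth_field U g"
    and L_block: "\<forall>x\<in>U. \<forall>i j. (i \<in> Iu \<longleftrightarrow> j \<notin> Iu) \<longrightarrow> L x $ i $ j = 0"
    and A_u: "\<forall>x\<in>U. \<forall>i\<in>Iu. \<forall>j\<in>Iu. \<forall>s. s \<notin> Iu \<longrightarrow> partial (\<lambda>y. L y $ i $ j) s x = 0"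
    and spec_disj: "\<forall>x\<in>U. \<forall>c. \<not> (block_eigenvalue (L x) Iu c \<and> block_eigenvalue (L x) (- Iu) c)"
    and g_sym: "\<forall>x\<in>U. transpose (g x) = g x" and g_nondeg: "\<forall>x\<in>U. det (g x) \<noteq> 0"
    and gt_def: "\<forall>x\<in>U. \<forall>i j. gt x $ i $ j = (\<Sum>k\<in>UNIV. L x $ j $ k * g x $ k $ i)"
    and gt_sym: "\<forall>x\<in>U. transpose (gt x) = gt x"
    and g_block: "\<forall>x\<in>U. \<forall>i j. (i \<in> Iu \<longleftrightarrow> j \<notin> Iu) \<longrightarrow> g x $ i $ j = 0"
    and gt_block: "\<forall>x\<in>U. \<forall>i j. (i \<in> Iu \<longleftrightarrow> j \<notin> Iu) \<longrightarrow> gt x $ i $ j = 0"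
    and killing: "\<forall>x\<in>U. \<forall>i k j.
       covd_up g gt i k j x + covd_up g gt k i j x + covd_up g gt j i k x = 0"
  shows "\<forall>x\<in>U. \<forall>i\<in>Iu. \<forall>j\<in>Iu. \<forall>s. s \<notin> Iu \<longrightarrow>
              partial (\<lambda>y. g y $ i $ j) s x = 0 \<and> partial (\<lambda>y. gt y $ i $ j) s x = 0"
proof (rule ballI)
  fix x assume x: "x \<in> U"
  define dg where "dg l a b = partial (\<lambda>y. g y $ a $ b) l x" for l a b
  define dL where "dL l a b = partial (\<lambda>y. L y $ a $ b) l x" for l a b
  define dT where "dT l a b = partial (\<lambda>y. gt y $ a $ b) l x" for l a b
  define dG where "dG l a b = partial (\<lambda>y. lower g y $ a $ b) l x" for l a b
  have HDg: "HD (\<lambda>y. g y $ a $ b) l x (dg l a b)" for l a b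
    unfolding dg_def using g_smooth unfolding smooth_field_def by (intro LD_HD smooth_LD[OF U_open x]) blast
  have HDL: "HD (\<lambda>y. L y $ a $ b) l x (dL l a b)" for l a b
    unfolding dL_def using L_smooth unfolding smooth_field_def by (intro LD_HD smooth_LD[OF U_open x]) blast
  have HDG: "HD (\<lambda>y. lower g y $ a $ b) l x (dG l a b)" for l a b
  proof -
    have "LD (\<lambda>y. det (\<chi> p q. if q = a then axis b 1 $ p else g y $ p $ q) / det (g y)) l x"
    proof (rule LD_divide)
      show "LD (\<lambda>y. det (\<chi> p q. if q = a then axis b 1 $ p else g y $ p $ q)) l x"
      proof (rule LD_det)
        fix p q show "LD (\<lambda>y. (\<chi> p q. if q = a then axis b 1 $ p else g y $ p $ q) $ p $ q) l x"
          using HD_LD[OF HDg] by (cases "q = a") (auto intro: LD_const)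
      qed
      show "LD (\<lambda>y. det (g y)) l x" using HD_LD[OF HDg] by (intro LD_det) blast
      show "det (g x) \<noteq> 0" using g_nondeg x by blast
    qed
    then have "LD (\<lambda>y. lower g y $ a $ b) l x"
      by (rule LD_local[OF U_open x, rotated]) (simp add: lower_def inv_cramer g_nondeg)
    then show ?thesis unfolding dG_def by (rule LD_HD)
  qed
  have gsym: "g x $ a $ b = g x $ b $ a" for a b
    using arg_cong[OF g_sym[rule_format, OF x], of "\<lambda>A. A $ b $ a"] by (simp add: transpose_def)
  have Tsym: "gt x $ a $ b = gt x $ b $ a" for a b
    using arg_cong[OF gt_sym[rule_format, OF x], of "\<lambda>A. A $ b $ a"] by (simp add: transpose_def)
  have dGsym: "dG l a b = dG l b a" for l a b
  proof -
    have "lower g y $ a $ b = lower g y $ b $ a" if "y \<in> U" for y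
      using arg_cong[OF inv_sym[of "g y"], of "\<lambda>A. A $ b $ a"] g_sym g_nondeg that unfolding lower_def
      by (simp add: transpose_def)
    then show ?thesis unfolding dG_def by (rule partial_local[OF U_open x])
  qed
  have Gg: "(\<Sum>s\<in>UNIV. lower g x $ m $ s * g x $ s $ i) = (if m = i then 1 else 0)" for m i
    using arg_cong[OF inv_props(2)[of "g x"], of "\<lambda>A. A $ m $ i"] g_nondeg x
    by (simp add: lower_def matrix_matrix_mult_def mat_def)
  have H: "(\<Sum>m\<in>UNIV. g x $ k $ m * dG l m s) = - (\<Sum>m\<in>UNIV. dg l k m * lower g x $ m $ s)" for l k s
  proof -
    have h1: "HD (\<lambda>y. \<Sum>m\<in>UNIV. g y $ k $ m * lower g y $ m $ s) l x
              (\<Sum>m\<in>UNIV. dg l k m * lower g x $ m $ s + g x $ k $ m * dG l m s)"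
      by (rule HD_sum_prod) (rule HDg, rule HDG)
    have eq: "(if k = s then 1 else 0) = (\<Sum>m\<in>UNIV. g y $ k $ m * lower g y $ m $ s)" if "y \<in> U" for y
      using arg_cong[OF inv_props(1)[of "g y"], of "\<lambda>A. A $ k $ s"] g_nondeg that
      by (simp add: lower_def mat_def matrix_matrix_mult_def)
    have hc: "HD (\<lambda>y. if k = s then 1 else 0) l x 0" unfolding HD_def by simp
    have h2: "HD (\<lambda>y. \<Sum>m\<in>UNIV. g y $ k $ m * lower g y $ m $ s) l x 0"
      by (rule HD_local[OF U_open x _ hc]) (rule eq)
    have "(\<Sum>m\<in>UNIV. dg l k m * lower g x $ m $ s + g x $ k $ m * dG l m s) = 0"
      using HD_unique[OF h1 h2] .
    then show ?thesis by (simp add: sum.distrib eq_neg_iff_add_eq_0 add.commute)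
  qed
  have KA: "(\<Sum>s\<in>UNIV. g x $ i $ s * dT s k j + g x $ k $ s * dT s i j + g x $ j $ s * dT s i k)
     - (\<Sum>l\<in>UNIV. gt x $ l $ j * dg l k i + gt x $ l $ k * dg l j i + gt x $ i $ l * dg l j k) = 0" for i k j
  proof -
    have "covd_up g gt i k j x + covd_up g gt k i j x + covd_up g gt j i k x =
      (\<Sum>s\<in>UNIV. g x $ i $ s * dT s k j + g x $ k $ s * dT s i j + g x $ j $ s * dT s i k)
     - (\<Sum>l\<in>UNIV. gt x $ l $ j * dg l k i + gt x $ l $ k * dg l j i + gt x $ i $ l * dg l j k)"
      using killing_alg[where g="\<lambda>a b. g x $ a $ b" and G="\<lambda>a b. lower g x $ a $ b"
          and T="\<lambda>a b. gt x $ a $ b" and dg=dg and dG=dG and dT=dT and i=i and k=k and j=j,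
          OF gsym Tsym dGsym Gg H]
      unfolding covd_up_def covd_def christoffel_def dG_def dT_def by simp
    then show ?thesis using killing x by simp
  qed
  have dT0: "dT l a b = 0" if "a \<in> Iu \<longleftrightarrow> b \<notin> Iu" for l a b
    unfolding dT_def by (rule partial_zero_local[OF U_open x]) (use gt_block that in auto)
  have dg0: "dg l a b = 0" if "a \<in> Iu \<longleftrightarrow> b \<notin> Iu" for l a b
    unfolding dg_def by (rule partial_zero_local[OF U_open x]) (use g_block that in auto)
  have dTf: "dT l a b = (\<Sum>k\<in>UNIV. dL l b k * g x $ k $ a + L x $ b $ k * dg l k a)" for l a b
  proof -
    have "HD (\<lambda>y. \<Sum>k\<in>UNIV. L y $ b $ k * g y $ k $ a) l x (\<Sum>k\<in>UNIV. dL l b k * g x $ k $ a + L x $ b $ k * dg l k a)"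
      by (rule HD_sum_prod) (rule HDL, rule HDg)
    then have "HD (\<lambda>y. gt y $ a $ b) l x (\<Sum>k\<in>UNIV. dL l b k * g x $ k $ a + L x $ b $ k * dg l k a)"
      by (rule HD_local[OF U_open x, rotated]) (simp add: gt_def)
    then show ?thesis unfolding dT_def by (rule HD_partial)
  qed
  have dLz: "dL s b k = 0" if "s \<notin> Iu" "b \<in> Iu" for s b k
  proof (cases "k \<in> Iu")
    case True then show ?thesis unfolding dL_def using A_u x that by blast
  next
    case False then show ?thesis unfolding dL_def
      by (intro partial_zero_local[OF U_open x]) (use L_block that in auto)
  qed
  have dTu: "dT s a b = (\<Sum>k\<in>UNIV. L x $ b $ k * dg s k a)" if "s \<notin> Iu" "b \<in> Iu" for s a b
    unfolding dTf using dLz[OF that] by simp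
  have gz: "g x $ a $ b = 0" if "a \<in> Iu \<longleftrightarrow> b \<notin> Iu" for a b using g_block x that by blast
  have Lz: "L x $ a $ b = 0" if "a \<in> Iu \<longleftrightarrow> b \<notin> Iu" for a b using L_block x that by blast
  have E: "(\<Sum>s\<in>UNIV. g x $ \<alpha> $ s * dT s a b) = (\<Sum>l\<in>UNIV. gt x $ \<alpha> $ l * dg l b a)"
    if "\<alpha> \<notin> Iu" "a \<in> Iu" "b \<in> Iu" for \<alpha> a b
  proof -
    have z1: "dT s \<alpha> b = 0" "dT s \<alpha> a = 0" "dg s a \<alpha> = 0" "dg s b \<alpha> = 0" for s
      using that by (auto intro!: dT0 dg0)
    show ?thesis using KA[of \<alpha> a b] by (simp add: z1)
  qed
  have eqW: "(\<Sum>k\<in>UNIV. L x $ b $ k * dg s k a) = (\<Sum>l\<in>UNIV. L x $ l $ s * dg l b a)"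
    if "a \<in> Iu" "b \<in> Iu" "s \<notin> Iu" for a b s
  proof -
    define W where "W = (\<chi> s. if s \<in> Iu then 0 else (\<Sum>k\<in>UNIV. L x $ b $ k * dg s k a) - (\<Sum>l\<in>UNIV. L x $ l $ s * dg l b a))"
    have gW: "g x *v W = 0"
    proof (rule iffD2[OF vec_eq_iff], rule allI)
      fix \<alpha>
      show "(g x *v W) $ \<alpha> = 0 $ \<alpha>"
      proof (cases "\<alpha> \<in> Iu")
        case True
        have "(g x *v W) $ \<alpha> = (\<Sum>s\<in>UNIV. g x $ \<alpha> $ s * W $ s)" by (simp add: matrix_vector_mult_def)
        also have "\<dots> = 0" by (rule sum.neutral) (use True gz in \<open>auto simp: W_def\<close>)
        finally show ?thesis by simp
      next
        case False
        have "(g x *v W) $ \<alpha> = (\<Sum>s\<in>UNIV. g x $ \<alpha> $ s * W $ s)" by (simp add: matrix_vector_mult_def)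
        also have "\<dots> = (\<Sum>s\<in>UNIV. g x $ \<alpha> $ s * dT s a b - g x $ \<alpha> $ s * (\<Sum>l\<in>UNIV. L x $ l $ s * dg l b a))"
        proof (rule sum.cong[OF refl])
          fix s
          show "g x $ \<alpha> $ s * W $ s = g x $ \<alpha> $ s * dT s a b - g x $ \<alpha> $ s * (\<Sum>l\<in>UNIV. L x $ l $ s * dg l b a)"
          proof (cases "s \<in> Iu")
            case True then show ?thesis using gz[of \<alpha> s] False by simp
          next
            case sI: False then show ?thesis using dTu[OF sI that(2)] by (simp add: W_def right_diff_distrib)
          qed
        qed
        also have "\<dots> = (\<Sum>s\<in>UNIV. g x $ \<alpha> $ s * dT s a b) - (\<Sum>s\<in>UNIV. g x $ \<alpha> $ s * (\<Sum>l\<in>UNIV. L x $ l $ s * dg l b a))"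
          by (rule sum_subtractf)
        also have "(\<Sum>s\<in>UNIV. g x $ \<alpha> $ s * (\<Sum>l\<in>UNIV. L x $ l $ s * dg l b a)) = (\<Sum>l\<in>UNIV. gt x $ \<alpha> $ l * dg l b a)"
        proof -
          have "(\<Sum>s\<in>UNIV. g x $ \<alpha> $ s * (\<Sum>l\<in>UNIV. L x $ l $ s * dg l b a)) = (\<Sum>s\<in>UNIV. \<Sum>l\<in>UNIV. L x $ l $ s * g x $ s $ \<alpha> * dg l b a)"
            by (simp add: sum_distrib_left gsym[of \<alpha>] mult_ac)
          also have "\<dots> = (\<Sum>l\<in>UNIV. \<Sum>s\<in>UNIV. L x $ l $ s * g x $ s $ \<alpha> * dg l b a)" by (rule sum.swap)
          also have "\<dots> = (\<Sum>l\<in>UNIV. gt x $ \<alpha> $ l * dg l b a)"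
            using gt_def x by (simp add: sum_distrib_right)
          finally show ?thesis .
        qed
        finally show ?thesis using E[OF False that(1,2)] by simp
      qed
    qed
    have "invertible (g x)" using invertible_det_nz g_nondeg x by blast
    then have "W = 0" using gW inj_matrix_vector_mult[of "g x"] by (metis inj_eq matrix_vector_mult_0_right)
    then have "W $ s = 0" by simp
    then show ?thesis using that(3) unfolding W_def by simp
  qed
  have dgz: "dg s i a = 0" if "a \<in> Iu" "i \<in> Iu" "s \<notin> Iu" for a i s
  proof -
    define Z where "Z = (\<chi> i j. if i \<in> Iu \<and> j \<notin> Iu then complex_of_real (dg j i a) else 0)"
    have comm: "Mc (L x) ** Z = Z ** Mc (L x)"
    proof (rule mat_eqI)
      fix i j
      have l: "(Mc (L x) ** Z) $ i $ j = (if i \<in> Iu \<and> j \<notin> Iu then complex_of_real (\<Sum>k\<in>UNIV. L x $ i $ k * dg j k a) else 0)"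
      proof (cases "i \<in> Iu \<and> j \<notin> Iu")
        case True
        have "(Mc (L x) ** Z) $ i $ j = (\<Sum>k\<in>UNIV. complex_of_real (L x $ i $ k * dg j k a))"
          unfolding matrix_matrix_mult_def Mc_def Z_def vec_lambda_beta
          by (rule sum.cong[OF refl]) (use True Lz in auto)
        then show ?thesis using True by simp
      next
        case False
        have "(Mc (L x) ** Z) $ i $ j = 0"
          unfolding matrix_matrix_mult_def Mc_def Z_def vec_lambda_beta
          by (rule sum.neutral) (use False Lz in auto)
        then show ?thesis unfolding if_not_P[OF False] .
      qed
      have r: "(Z ** Mc (L x)) $ i $ j = (if i \<in> Iu \<and> j \<notin> Iu then complex_of_real (\<Sum>l\<in>UNIV. L x $ l $ j * dg l i a) else 0)"
      proof (cases "i \<in> Iu \<and> j \<notin> Iu")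
        case True
        have "(Z ** Mc (L x)) $ i $ j = (\<Sum>l\<in>UNIV. complex_of_real (L x $ l $ j * dg l i a))"
          unfolding matrix_matrix_mult_def Mc_def Z_def vec_lambda_beta
          by (rule sum.cong[OF refl]) (use True Lz in auto)
        then show ?thesis using True by simp
      next
        case False
        have "(Z ** Mc (L x)) $ i $ j = 0"
          unfolding matrix_matrix_mult_def Mc_def Z_def vec_lambda_beta
          by (rule sum.neutral) (use False Lz in auto)
        then show ?thesis unfolding if_not_P[OF False] .
      qed
      show "(Mc (L x) ** Z) $ i $ j = (Z ** Mc (L x)) $ i $ j"
        unfolding l r using eqW[OF that(1)] by auto
    qed
    have "Z = 0"
      by (rule sylvester[where I=Iu, OF _ _ _ comm]) (use L_block spec_disj x in \<open>auto simp: Z_def\<close>)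
    then have "Z $ i $ s = 0" by simp
    then show ?thesis using that unfolding Z_def by simp
  qed
  show "\<forall>i\<in>Iu. \<forall>j\<in>Iu. \<forall>s. s \<notin> Iu \<longrightarrow>
              partial (\<lambda>y. g y $ i $ j) s x = 0 \<and> partial (\<lambda>y. gt y $ i $ j) s x = 0"
  proof (intro ballI allI impI conjI)
    fix i j s assume i: "i \<in> Iu" and j: "j \<in> Iu" and s: "s \<notin> Iu"
    show "partial (\<lambda>y. g y $ i $ j) s x = 0" using dgz[OF j i s] unfolding dg_def .
    have "dT s i j = 0"
      unfolding dTu[OF s j]
    proof (rule sum.neutral, rule ballI)
      fix k show "L x $ j $ k * dg s k i = 0"
        using dgz[OF i _ s, of k] Lz[of j k] j by (cases "k \<in> Iu") auto
    qed
    then show "partial (\<lambda>y. gt y $ i $ j) s x = 0" unfolding dT_def .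
  qed
qed


theorem lemma2:
  fixes U :: "(real^'n) set" and Iu :: "'n set"
    and L g gt :: "real^'n \<Rightarrow> real^'n^'n"
  assumes U_open: "open U"
    and L_smooth: "smooth_field U L" and g_smooth: "smooth_field U g"
    and N_zero: "\<forall>x\<in>U. \<forall>k i j. nijenhuis L x k i j = 0"
    and L_block: "\<forall>x\<in>U. \<forall>i j. (i \<in> Iu \<longleftrightarrow> j \<notin> Iu) \<longrightarrow> L x $ i $ j = 0"
    and A_u: "\<forall>x\<in>U. \<forall>i\<in>Iu. \<forall>j\<in>Iu. \<forall>s. s \<notin> Iu \<longrightarrow> partial (\<lambda>y. L y $ i $ j) s x = 0"
    and B_v: "\<forall>x\<in>U. \<forall>i j s. i \<notin> Iu \<longrightarrow> j \<notin> Iu \<longrightarrow> s \<in> Iu \<longrightarrow> partial (\<lambda>y. L y $ i $ j) s x = 0"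
    and spec_disj: "\<forall>x\<in>U. \<forall>c. \<not> (block_eigenvalue (L x) Iu c \<and> block_eigenvalue (L x) (- Iu) c)"
    and g_sym: "\<forall>x\<in>U. transpose (g x) = g x" and g_nondeg: "\<forall>x\<in>U. det (g x) \<noteq> 0"
    and gt_def: "\<forall>x\<in>U. \<forall>i j. gt x $ i $ j = (\<Sum>k\<in>UNIV. L x $ j $ k * g x $ k $ i)"
    and gt_sym: "\<forall>x\<in>U. transpose (gt x) = gt x" and gt_nondeg: "\<forall>x\<in>U. det (gt x) \<noteq> 0"
    and g_block: "\<forall>x\<in>U. \<forall>i j. (i \<in> Iu \<longleftrightarrow> j \<notin> Iu) \<longrightarrow> g x $ i $ j = 0"
    and gt_block: "\<forall>x\<in>U. \<forall>i j. (i \<in> Iu \<longleftrightarrow> j \<notin> Iu) \<longrightarrow> gt x $ i $ j = 0"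
    and killing: "\<forall>x\<in>U. \<forall>i k j.
       covd_up g gt i k j x + covd_up g gt k i j x + covd_up g gt j i k x = 0"
  shows "\<forall>x\<in>U. (\<forall>i\<in>Iu. \<forall>j\<in>Iu. \<forall>s. s \<notin> Iu \<longrightarrow>
              partial (\<lambda>y. g y $ i $ j) s x = 0 \<and> partial (\<lambda>y. gt y $ i $ j) s x = 0)
          \<and> (\<forall>i j s. i \<notin> Iu \<longrightarrow> j \<notin> Iu \<longrightarrow> s \<in> Iu \<longrightarrow>
              partial (\<lambda>y. g y $ i $ j) s x = 0 \<and> partial (\<lambda>y. gt y $ i $ j) s x = 0)"
proof -
  have one: "\<forall>x\<in>U. \<forall>i\<in>Iu. \<forall>j\<in>Iu. \<forall>s. s \<notin> Iu \<longrightarrow>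
              partial (\<lambda>y. g y $ i $ j) s x = 0 \<and> partial (\<lambda>y. gt y $ i $ j) s x = 0"
    by (rule one_side[OF U_open L_smooth g_smooth L_block A_u spec_disj g_sym g_nondeg gt_def gt_sym g_block gt_block killing])
  have two: "\<forall>x\<in>U. \<forall>i\<in>-Iu. \<forall>j\<in>-Iu. \<forall>s. s \<notin> -Iu \<longrightarrow>
              partial (\<lambda>y. g y $ i $ j) s x = 0 \<and> partial (\<lambda>y. gt y $ i $ j) s x = 0"
  proof (rule one_side[OF U_open L_smooth g_smooth _ _ _ g_sym g_nondeg gt_def gt_sym _ _ killing])
    show "\<forall>x\<in>U. \<forall>i j. (i \<in> - Iu \<longleftrightarrow> j \<notin> - Iu) \<longrightarrow> L x $ i $ j = 0" using L_block by auto
    show "\<forall>x\<in>U. \<forall>i\<in>- Iu. \<forall>j\<in>- Iu. \<forall>s. s \<notin> - Iu \<longrightarrow> partial (\<lambda>y. L y $ i $ j) s x = 0"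
      using B_v by auto
    show "\<forall>x\<in>U. \<forall>c. \<not> (block_eigenvalue (L x) (- Iu) c \<and> block_eigenvalue (L x) (- (- Iu)) c)"
      using spec_disj by auto
    show "\<forall>x\<in>U. \<forall>i j. (i \<in> - Iu \<longleftrightarrow> j \<notin> - Iu) \<longrightarrow> g x $ i $ j = 0" using g_block by auto
    show "\<forall>x\<in>U. \<forall>i j. (i \<in> - Iu \<longleftrightarrow> j \<notin> - Iu) \<longrightarrow> gt x $ i $ j = 0" using gt_block by auto
  qed
  show ?thesis
  proof (rule ballI, rule conjI)
    fix x assume x: "x \<in> U"
    show "\<forall>i\<in>Iu. \<forall>j\<in>Iu. \<forall>s. s \<notin> Iu \<longrightarrow>
              partial (\<lambda>y. g y $ i $ j) s x = 0 \<and> partial (\<lambda>y. gt y $ i $ j) s x = 0"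
      using one x by blast
    show "\<forall>i j s. i \<notin> Iu \<longrightarrow> j \<notin> Iu \<longrightarrow> s \<in> Iu \<longrightarrow>
              partial (\<lambda>y. g y $ i $ j) s x = 0 \<and> partial (\<lambda>y. gt y $ i $ j) s x = 0"
      using two x by simp
  qed
qed

end
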